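(* Let $(X,d)$ be a $\delta$-hyperbolic space and $a,b$ isometries of $X$. (i) If there is $x\in X$ with $d(a^px,b^qx)>\max[d(x,a^px),d(x,b^qx)]+2\delta$ for all $(p,q)\in\mathbb Z^*\times\mathbb Z^*$, then the subgroup of $\operatorname{Isom}(X,d)$ generated by $a$ and $b$ is free, freely generated by $a,b$. (ii) If there is $x\in X$ with $d(a^px,b^qx)>\max[d(x,a^px),d(x,b^qx)]+2\delta$ for all $(p,q)\in(\mathbb Z^*\times\mathbb Z^* )\setminus(\mathbb Z^-\times\mathbb Z^-)$, then the semigroup generated by $a$ and $b$ is free.
   Context: $\mathbb Z^*=\mathbb Z\setminus\{0\}$, $\mathbb Z^-$ the negative integers. $\delta$-hyperbolic: geodesic, proper metric space all of whose geodesic triangles are $\delta$-thin in the tripod sense (Gromov products $(y|z)_x=\frac12(d(x,y)+d(x,z)-d(y,z))$; triangle mapped onto its tripod isometrically on each side, points with same image at distance $\le\delta$). A semigroup generated by $\{a,b\}$ is free if distinct nonempty positive words in $a,b$ give distinct elements. *)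

theory Defs
  imports "HOL-Analysis.Analysis"
begin

text \<open>The metric space (X,d) is the whole of a type of class metric_space.\<close>

definition proper_metric :: "'a::metric_space itself \<Rightarrow> bool" where
  "proper_metric _ \<longleftrightarrow> (\<forall>(x::'a) r. compact (cball x r))"

definition geodesic_from :: "'a::metric_space \<Rightarrow> 'a \<Rightarrow> (real \<Rightarrow> 'a) \<Rightarrow> bool" where
  "geodesic_from x y g \<longleftrightarrow> g 0 = x \<and> g (dist x y) = y \<and>
     (\<forall>s\<in>{0..dist x y}. \<forall>t\<in>{0..dist x y}. dist (g s) (g t) = \<bar>s - t\<bar>)"

definition geodesic_metric :: "'a::metric_space itself \<Rightarrow> bool" where
  "geodesic_metric _ \<longleftrightarrow> (\<forall>x y::'a. \<exists>g. geodesic_from x y g)"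

definition gromov_product :: "'a::metric_space \<Rightarrow> 'a \<Rightarrow> 'a \<Rightarrow> real" where
  "gromov_product x y z = (dist x y + dist x z - dist y z) / 2"

text \<open>Tripod thinness of the geodesic triangle with sides gxy (x to y), gxz (x to z),
  gyz (y to z): points of two sides issuing from a common vertex, at the same distance
  t from that vertex, with t at most the Gromov product at that vertex (i.e. points with
  the same image in the tripod), are at distance at most delta.\<close>
definition thin_triangle :: "real \<Rightarrow> 'a::metric_space \<Rightarrow> 'a \<Rightarrow> 'a \<Rightarrow>
    (real \<Rightarrow> 'a) \<Rightarrow> (real \<Rightarrow> 'a) \<Rightarrow> (real \<Rightarrow> 'a) \<Rightarrow> bool" where
  "thin_triangle \<delta> x y z gxy gxz gyz \<longleftrightarrow>
     (\<forall>t. 0 \<le> t \<and> t \<le> gromov_product x y z \<longrightarrow> dist (gxy t) (gxz t) \<le> \<delta>) \<and>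
     (\<forall>t. 0 \<le> t \<and> t \<le> gromov_product y x z \<longrightarrow>
          dist (gxy (dist x y - t)) (gyz t) \<le> \<delta>) \<and>
     (\<forall>t. 0 \<le> t \<and> t \<le> gromov_product z x y \<longrightarrow>
          dist (gxz (dist x z - t)) (gyz (dist y z - t)) \<le> \<delta>)"

definition hyperbolic :: "real \<Rightarrow> 'a::metric_space itself \<Rightarrow> bool" where
  "hyperbolic \<delta> T \<longleftrightarrow> geodesic_metric T \<and> proper_metric T \<and>
     (\<forall>(x::'a) y z gxy gxz gyz. geodesic_from x y gxy \<and> geodesic_from x z gxz \<and>
        geodesic_from y z gyz \<longrightarrow> thin_triangle \<delta> x y z gxy gxz gyz)"

definition isometry :: "('a::metric_space \<Rightarrow> 'a) \<Rightarrow> bool" where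
  "isometry f \<longleftrightarrow> bij f \<and> (\<forall>x y. dist (f x) (f y) = dist x y)"

definition ipow :: "('a \<Rightarrow> 'a) \<Rightarrow> int \<Rightarrow> 'a \<Rightarrow> 'a" where
  "ipow f p = (if 0 \<le> p then f ^^ nat p else (inv f) ^^ nat (- p))"

text \<open>Words in a^{+-1}, b^{+-1}: a letter (g, e) is the generator a if g, b otherwise,
  inverted if e.  A word is reduced if no letter is followed by its inverse.\<close>
fun reduced :: "(bool \<times> bool) list \<Rightarrow> bool" where
  "reduced (l1 # l2 # w) \<longleftrightarrow> \<not> (fst l1 = fst l2 \<and> snd l1 \<noteq> snd l2) \<and> reduced (l2 # w)"
| "reduced _ \<longleftrightarrow> True"

fun eval_word :: "('a \<Rightarrow> 'a) \<Rightarrow> ('a \<Rightarrow> 'a) \<Rightarrow> (bool \<times> bool) list \<Rightarrow> 'a \<Rightarrow> 'a" where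
  "eval_word a b [] = id"
| "eval_word a b ((g, e) # w) =
     (let c = (if g then a else b) in if e then inv c else c) \<circ> eval_word a b w"

definition freely_generate :: "('a \<Rightarrow> 'a) \<Rightarrow> ('a \<Rightarrow> 'a) \<Rightarrow> bool" where
  "freely_generate a b \<longleftrightarrow> (\<forall>w. w \<noteq> [] \<and> reduced w \<longrightarrow> eval_word a b w \<noteq> id)"

fun eval_pos_word :: "('a \<Rightarrow> 'a) \<Rightarrow> ('a \<Rightarrow> 'a) \<Rightarrow> bool list \<Rightarrow> 'a \<Rightarrow> 'a" where
  "eval_pos_word a b [] = id"
| "eval_pos_word a b (g # w) = (if g then a else b) \<circ> eval_pos_word a b w"

definition free_semigroup :: "('a \<Rightarrow> 'a) \<Rightarrow> ('a \<Rightarrow> 'a) \<Rightarrow> bool" where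
  "free_semigroup a b \<longleftrightarrow> (\<forall>u v. u \<noteq> [] \<and> v \<noteq> [] \<and> u \<noteq> v \<longrightarrow>
     eval_pos_word a b u \<noteq> eval_pos_word a b v)"

end

theory Submission
  imports Defs
begin

lemma gp_nonneg: "gromov_product x y z \<ge> 0"
  using dist_triangle[of y z x] by (simp add: gromov_product_def dist_commute)

lemma gp_le: "gromov_product x y z \<le> dist x y"
  using dist_triangle[of x z y] by (simp add: gromov_product_def dist_commute)

lemma gp_le2: "gromov_product x y z \<le> dist x z"
  using dist_triangle[of x y z] by (simp add: gromov_product_def dist_commute)

lemma gp_comm: "gromov_product x y z = gromov_product x z y"
  by (simp add: gromov_product_def dist_commute)

lemma gp_sum: "gromov_product u v w + gromov_product v u w = dist u v"
  by (simp add: gromov_product_def dist_commute field_simps)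

lemma delta_nonneg:
  assumes "hyperbolic \<delta> TYPE('a::metric_space)" shows "\<delta> \<ge> 0"
proof -
  obtain g where g: "geodesic_from (undefined::'a) undefined g"
    using assms unfolding hyperbolic_def geodesic_metric_def by blast
  then have "thin_triangle \<delta> (undefined::'a) undefined undefined g g g"
    using assms unfolding hyperbolic_def by blast
  then have "dist (g 0) (g 0) \<le> \<delta>" unfolding thin_triangle_def gromov_product_def by auto
  thus ?thesis by simp
qed

lemma geo_end:
  assumes "geodesic_from w x g" "0 \<le> t" "t \<le> dist w x"
  shows "dist (g t) x = dist w x - t"
proof -
  have gd: "g (dist w x) = x" using assms(1) unfolding geodesic_from_def by blast
  have H: "\<forall>s\<in>{0..dist w x}. \<forall>t\<in>{0..dist w x}. dist (g s) (g t) = \<bar>s - t\<bar>"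
    using assms(1) unfolding geodesic_from_def by blast
  moreover have "dist (g t) (g (dist w x)) = \<bar>t - dist w x\<bar>"
    using H assms(2,3) by simp
  then show ?thesis using assms gd by simp
qed

lemma four_point:
  assumes hyp: "hyperbolic \<delta> TYPE('a::metric_space)"
  shows "gromov_product (w::'a) x z \<ge> min (gromov_product w x y) (gromov_product w y z) - \<delta>"
proof -
  obtain gx gy gz gxy gyz where
    gx: "geodesic_from w x gx" and gy: "geodesic_from w y gy" and gz: "geodesic_from w z gz"
    and gxy: "geodesic_from x y gxy" and gyz: "geodesic_from y z gyz"
    using hyp unfolding hyperbolic_def geodesic_metric_def by metis
  have T1: "thin_triangle \<delta> w x y gx gy gxy" using hyp gx gy gxy unfolding hyperbolic_def by blast
  have T2: "thin_triangle \<delta> w y z gy gz gyz" using hyp gy gz gyz unfolding hyperbolic_def by blast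
  define t where "t = min (gromov_product w x y) (gromov_product w y z)"
  have t0: "0 \<le> t" using gp_nonneg[of w x y] gp_nonneg[of w y z] unfolding t_def by simp
  have t1: "t \<le> gromov_product w x y" "t \<le> gromov_product w y z" unfolding t_def by auto
  have d1: "dist (gx t) (gy t) \<le> \<delta>" using T1 t0 t1 unfolding thin_triangle_def by blast
  have d2: "dist (gy t) (gz t) \<le> \<delta>" using T2 t0 t1 unfolding thin_triangle_def by blast
  have tx: "t \<le> dist w x" using gp_le[of w x y] t1 by linarith
  have tz: "t \<le> dist w z" using gp_le2[of w y z] t1 by linarith
  have ex: "dist (gx t) x = dist w x - t" using geo_end[OF gx t0 tx] .
  have ez: "dist (gz t) z = dist w z - t" using geo_end[OF gz t0 tz] .
  have "dist x z \<le> dist x (gx t) + dist (gx t) (gy t) + dist (gy t) (gz t) + dist (gz t) z"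
    using dist_triangle[of x z "gx t"] dist_triangle[of "gx t" z "gy t"]
      dist_triangle[of "gy t" z "gz t"] by linarith
  then have "dist x z \<le> dist w x - t + 2 * \<delta> + dist w z - t"
    using ex ez d1 d2 by (simp add: dist_commute)
  then have "gromov_product w x z \<ge> t - \<delta>" unfolding gromov_product_def by (simp add: field_simps)
  then show ?thesis unfolding t_def by simp
qed

definition gen :: "('a \<Rightarrow> 'a) \<Rightarrow> ('a \<Rightarrow> 'a) \<Rightarrow> bool \<Rightarrow> 'a \<Rightarrow> 'a" where
  "gen a b g = (if g then a else b)"

lemma iso_inv: assumes "isometry f" shows "isometry (inv f)"
proof -
  have b: "bij f" using assms unfolding isometry_def by blast
  have "dist (inv f x) (inv f y) = dist x y" for x y
  proof -
    have "dist (inv f x) (inv f y) = dist (f (inv f x)) (f (inv f y))"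
      using assms unfolding isometry_def by simp
    also have "\<dots> = dist x y" using b by (simp add: bij_is_surj surj_f_inv_f)
    finally show ?thesis .
  qed
  thus ?thesis using b bij_imp_bij_inv unfolding isometry_def by blast
qed

lemma iso_funpow: assumes "isometry f" shows "isometry (f ^^ (n::nat))"
proof (induction n)
  case 0 then show ?case by (auto simp: isometry_def bij_def inj_on_def)
next
  case (Suc n)
  then show ?case using assms unfolding isometry_def by (auto intro: bij_comp)
qed

lemma iso_ipow: "isometry f \<Longrightarrow> isometry (ipow f k)"
  unfolding ipow_def by (auto intro: iso_funpow iso_inv)

lemma funpow_inv1: "bij (f::'a\<Rightarrow>'a) \<Longrightarrow> (f ^^ (n::nat)) ((inv f ^^ n) x) = x"
proof (induction n arbitrary: x)
  case 0 then show ?case by (simp only: funpow.simps id_apply)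
next
  case (Suc n)
  have e1: "f ^^ Suc n = (f ^^ n) \<circ> f" by (rule funpow_Suc_right)
  have e2: "inv f ^^ Suc n = inv f \<circ> (inv f ^^ n)" by simp
  have "(f ^^ Suc n) ((inv f ^^ Suc n) x) = (f ^^ n) (f (inv f ((inv f ^^ n) x)))"
    by (simp only: e1 e2 comp_apply)
  also have "\<dots> = (f ^^ n) ((inv f ^^ n) x)" using Suc.prems by (simp add: bij_is_surj surj_f_inv_f)
  finally show ?case using Suc by simp
qed

lemma funpow_inv2: "bij (f::'a\<Rightarrow>'a) \<Longrightarrow> (inv f ^^ (n::nat)) ((f ^^ n) x) = x"
proof (induction n arbitrary: x)
  case 0 then show ?case by (simp only: funpow.simps id_apply)
next
  case (Suc n)
  have e1: "inv f ^^ Suc n = (inv f ^^ n) \<circ> inv f" by (rule funpow_Suc_right)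
  have e2: "f ^^ Suc n = f \<circ> (f ^^ n)" by simp
  have "(inv f ^^ Suc n) ((f ^^ Suc n) x) = (inv f ^^ n) (inv f (f ((f ^^ n) x)))"
    by (simp only: e1 e2 comp_apply)
  also have "\<dots> = (inv f ^^ n) ((f ^^ n) x)" using Suc.prems by (simp add: bij_is_inj inv_f_f)
  finally show ?case using Suc by simp
qed

lemma ipow_cancel: "bij f \<Longrightarrow> ipow f k (ipow f (-k) x) = x"
  unfolding ipow_def using funpow_inv1 funpow_inv2
  by (cases "k = 0") auto

lemma iso_gen: "isometry a \<Longrightarrow> isometry b \<Longrightarrow> isometry (gen a b g)"
  unfolding gen_def by simp

lemma gp_iso: "isometry f \<Longrightarrow> gromov_product (f u) (f v) (f w) = gromov_product u v w"
  unfolding isometry_def gromov_product_def by simp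

lemma reduced_Cons: "reduced (l # w) \<Longrightarrow> reduced w"
  by (cases w) auto

lemma reduced_append: "reduced (u @ v) \<Longrightarrow> reduced v"
  by (induction u) (auto dest: reduced_Cons)

lemma decomp:
  assumes "reduced v" "v \<noteq> []"
  shows "\<exists>m rest. m \<ge> 1 \<and> v = replicate m (hd v) @ rest \<and> reduced rest \<and>
           (rest = [] \<or> fst (hd rest) \<noteq> fst (hd v))"
proof -
  define l where "l = hd v"
  define m where "m = length (takeWhile (\<lambda>y. y = l) v)"
  define rest where "rest = dropWhile (\<lambda>y. y = l) v"
  have tw: "takeWhile (\<lambda>y. y = l) v = replicate m l"
    unfolding m_def by (metis (mono_tags, lifting) replicate_length_same set_takeWhileD)
  have v: "v = replicate m l @ rest" using tw unfolding rest_def by (metis takeWhile_dropWhile_id)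
  have m1: "m \<ge> 1" using assms(2) unfolding m_def l_def by (cases v) auto
  have "reduced (replicate m l @ rest)" using assms(1) v by simp
  then have rr: "reduced rest" by (rule reduced_append)
  have "fst (hd rest) \<noteq> fst l" if ne: "rest \<noteq> []"
  proof
    assume eq: "fst (hd rest) = fst l"
    have hn: "hd rest \<noteq> l" using hd_dropWhile[of "\<lambda>y. y = l" v] ne unfolding rest_def by blast
    obtain r rs where r: "rest = r # rs" using ne by (cases rest) auto
    obtain m' where m': "m = Suc m'" using m1 by (cases m) auto
    have "v = replicate m' l @ (l # r # rs)" using v r m'
      by (simp add: replicate_app_Cons_same)
    then have "reduced (replicate m' l @ (l # r # rs))" using assms(1) by simp
    then have "reduced (l # r # rs)" by (rule reduced_append)
    then have "snd l = snd r" using eq r by simp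
    then show False using eq hn r by (simp add: prod_eq_iff)
  qed
  then show ?thesis using v m1 rr unfolding l_def by blast
qed

lemma eval_rep_pow:
  "eval_word a b (replicate m (g, e) @ rest) =
     ((if e then inv (gen a b g) else gen a b g) ^^ m) \<circ> eval_word a b rest"
  by (induction m) (auto simp: gen_def Let_def)

lemma eval_rep:
  "eval_word a b (replicate m (g, e) @ rest) =
     ipow (gen a b g) (if e then - int m else int m) \<circ> eval_word a b rest"
  unfolding eval_rep_pow ipow_def by (cases "m = 0") auto

context
  fixes a b :: "'a::metric_space \<Rightarrow> 'a" and \<delta> :: real and x :: 'a and pos :: bool
  assumes hyp: "hyperbolic \<delta> TYPE('a)"
    and isoa: "isometry a" and isob: "isometry b"
    and Hpos: "\<forall>p q. p \<noteq> 0 \<and> q \<noteq> 0 \<and> \<not> (p < 0 \<and> q < 0) \<longrightarrow>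
            dist (ipow a p x) (ipow b q x)
              > max (dist x (ipow a p x)) (dist x (ipow b q x)) + 2 * \<delta>"
    and Hall: "\<not> pos \<longrightarrow> (\<forall>p q. p \<noteq> 0 \<and> q \<noteq> 0 \<longrightarrow>
            dist (ipow a p x) (ipow b q x)
              > max (dist x (ipow a p x)) (dist x (ipow b q x)) + 2 * \<delta>)"
begin

lemma pairC:
  assumes "g \<noteq> h" "k \<noteq> 0" "j \<noteq> 0" "\<not> pos \<or> \<not> (k < 0 \<and> j < 0)"
  shows "dist (ipow (gen a b g) k x) (ipow (gen a b h) j x)
     > max (dist x (ipow (gen a b g) k x)) (dist x (ipow (gen a b h) j x)) + 2 * \<delta>"
proof (cases g)
  case True
  then have h: "\<not> h" using assms by simp
  show ?thesis using assms Hpos Hall True h unfolding gen_def by auto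
next
  case False
  then have h: "h" using assms by simp
  have "dist (ipow a j x) (ipow b k x)
     > max (dist x (ipow a j x)) (dist x (ipow b k x)) + 2 * \<delta>"
    using assms Hpos Hall by auto
  then show ?thesis using False h unfolding gen_def by (simp add: dist_commute max.commute)
qed

lemma pair:
  assumes "g \<noteq> h" "k \<noteq> 0" "j \<noteq> 0" "\<not> pos \<or> \<not> (k < 0 \<and> j < 0)"
  shows "gromov_product x (ipow (gen a b g) k x) (ipow (gen a b h) j x)
     < min (dist x (ipow (gen a b g) k x)) (dist x (ipow (gen a b h) j x)) / 2 - \<delta>"
  using pairC[OF assms] unfolding gromov_product_def by (simp add: max_def min_def split: if_splits)

lemma Lpos:
  assumes "k \<noteq> 0" shows "dist x (ipow (gen a b g) k x) > 0"
proof (rule ccontr)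
  assume "\<not> ?thesis"
  then have e: "ipow (gen a b g) k x = x" by simp
  have "gromov_product x (ipow (gen a b g) k x) (ipow (gen a b (\<not> g)) 1 x)
     < min (dist x (ipow (gen a b g) k x)) (dist x (ipow (gen a b (\<not>g)) 1 x)) / 2 - \<delta>"
    using pair[of g "\<not> g" k 1] assms by simp
  then show False using e delta_nonneg[OF hyp] by (simp add: gromov_product_def min_def)
qed

lemma R:
  "reduced v \<Longrightarrow> (pos \<longrightarrow> (\<forall>l\<in>set v. snd l = False)) \<Longrightarrow> k \<noteq> 0 \<Longrightarrow> (pos \<longrightarrow> k > 0) \<Longrightarrow>
   (v = [] \<or> fst (hd v) \<noteq> g) \<Longrightarrow>
   gromov_product (ipow (gen a b g) k x) x (ipow (gen a b g) k (eval_word a b v x))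
     < dist x (ipow (gen a b g) k x) / 2"
proof (induction "length v" arbitrary: v g k rule: less_induct)
  case less
  show ?case
  proof (cases "v = []")
    case True
    then show ?thesis using Lpos[OF less.prems(3), of g]
      by (simp add: gromov_product_def dist_commute)
  next
    case False
    obtain m rest where m: "m \<ge> 1" "v = replicate m (hd v) @ rest" "reduced rest"
      "rest = [] \<or> fst (hd rest) \<noteq> fst (hd v)"
      using decomp[OF less.prems(1) False] by blast
    define h where "h = fst (hd v)"
    define e where "e = snd (hd v)"
    define j where "j = (if e then - int m else int m)"
    have hv: "hd v = (h, e)" unfolding h_def e_def by simp
    have ev: "eval_word a b v = ipow (gen a b h) j \<circ> eval_word a b rest"
      using eval_rep[of a b m h e rest] m(2) hv unfolding j_def by metis
    have hg: "h \<noteq> g" using less.prems(5) False unfolding h_def by simp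
    have j0: "j \<noteq> 0" using m(1) unfolding j_def by simp
    have hdin: "hd v \<in> set v" using False by simp
    have jp: "pos \<longrightarrow> j > 0" using less.prems(2) hdin m(1) unfolding j_def e_def by auto
    have len: "length rest < length v" using m(1,2) by (metis length_append length_replicate less_add_same_cancel2 less_le_trans zero_less_one)
    have setr: "set rest \<subseteq> set v" using m(2) by (metis set_append Un_upper2)
    have IH: "gromov_product (ipow (gen a b h) j x) x (ipow (gen a b h) j (eval_word a b rest x))
       < dist x (ipow (gen a b h) j x) / 2"
      using less.hyps[OF len m(3) _ j0 jp] less.prems(2) setr m(4) unfolding h_def by blast
    define y where "y = eval_word a b v x"
    have yv: "y = ipow (gen a b h) j (eval_word a b rest x)" using ev unfolding y_def by simp
    define Gk where "Gk = ipow (gen a b g) k"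
    define Gm where "Gm = ipow (gen a b g) (-k)"
    define Hj where "Hj = ipow (gen a b h) j"
    have iso: "isometry Gk" unfolding Gk_def by (intro iso_ipow iso_gen isoa isob)
    have canc: "Gk (Gm x) = x" unfolding Gk_def Gm_def
      using ipow_cancel iso_gen[OF isoa isob] isometry_def by metis
    have eq1: "gromov_product (Gk x) x (Gk y) = gromov_product x (Gm x) y"
      using gp_iso[OF iso, of x "Gm x" y] canc by simp
    have eq2: "dist x (Gk x) = dist x (Gm x)"
      using iso canc unfolding isometry_def by (metis dist_commute)
    have c: "gromov_product x (Gm x) (Hj x) < min (dist x (Gm x)) (dist x (Hj x)) / 2 - \<delta>"
      using pair[of g h "-k" j] hg less.prems(3) j0 jp unfolding Gm_def Hj_def by auto
    have IH2: "gromov_product x (Hj x) y > dist x (Hj x) / 2"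
      using IH gp_sum[of "Hj x" x y] yv unfolding Hj_def by (simp add: dist_commute)
    have fp: "gromov_product x (Gm x) (Hj x) \<ge>
        min (gromov_product x (Gm x) y) (gromov_product x y (Hj x)) - \<delta>"
      using four_point[OF hyp] by blast
    have "gromov_product x (Gm x) y < dist x (Gm x) / 2"
      using c IH2 fp gp_comm[of x y "Hj x"] by (simp add: min_def split: if_splits)
    then show ?thesis using eq1 eq2 unfolding Gk_def y_def by simp
  qed
qed

lemma S:
  assumes "reduced w" "w \<noteq> []" "pos \<longrightarrow> (\<forall>l\<in>set w. snd l = False)"
  shows "\<exists>j. j \<noteq> 0 \<and> (pos \<longrightarrow> j > 0) \<and>
     gromov_product (ipow (gen a b (fst (hd w))) j x) x (eval_word a b w x)
       < dist x (ipow (gen a b (fst (hd w))) j x) / 2"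
proof -
  obtain m rest where m: "m \<ge> 1" "w = replicate m (hd w) @ rest" "reduced rest"
    "rest = [] \<or> fst (hd rest) \<noteq> fst (hd w)"
    using decomp[OF assms(1,2)] by blast
  define h where "h = fst (hd w)"
  define e where "e = snd (hd w)"
  define j where "j = (if e then - int m else int m)"
  have hv: "hd w = (h, e)" unfolding h_def e_def by simp
  have ev: "eval_word a b w = ipow (gen a b h) j \<circ> eval_word a b rest"
    using eval_rep[of a b m h e rest] m(2) hv unfolding j_def by metis
  have j0: "j \<noteq> 0" using m(1) unfolding j_def by simp
  have hdin: "hd w \<in> set w" using assms(2) by simp
  have jp: "pos \<longrightarrow> j > 0" using assms(3) hdin m(1) unfolding j_def e_def by auto
  have setr: "set rest \<subseteq> set w" using m(2) by (metis set_append Un_upper2)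
  have "gromov_product (ipow (gen a b h) j x) x (ipow (gen a b h) j (eval_word a b rest x))
       < dist x (ipow (gen a b h) j x) / 2"
    using R[OF m(3) _ j0 jp] assms(3) setr m(4) unfolding h_def by blast
  then show ?thesis using ev j0 jp unfolding h_def by auto
qed

lemma notid:
  assumes "reduced w" "w \<noteq> []" "pos \<longrightarrow> (\<forall>l\<in>set w. snd l = False)"
  shows "eval_word a b w \<noteq> id"
proof
  assume "eval_word a b w = id"
  then obtain j where "gromov_product (ipow (gen a b (fst (hd w))) j x) x x
       < dist x (ipow (gen a b (fst (hd w))) j x) / 2"
    using S[OF assms] by auto
  then show False by (simp add: gromov_product_def dist_commute)
qed

end

lemma pos_eval: "eval_pos_word a b u = eval_word a b (map (\<lambda>g. (g, False)) u)"
  by (induction u) (auto simp: Let_def)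

lemma pos_reduced: "reduced (map (\<lambda>g. (g, False)) u)"
  by (induction u rule: induct_list012) auto

theorem proposition6p5:
  fixes a b :: "'a::metric_space \<Rightarrow> 'a" and \<delta> :: real
  assumes hyp: "hyperbolic \<delta> TYPE('a)"
    and isoa: "isometry a" and isob: "isometry b"
  shows "((\<exists>x. \<forall>p q. p \<noteq> 0 \<and> q \<noteq> 0 \<longrightarrow>
            dist (ipow a p x) (ipow b q x)
              > max (dist x (ipow a p x)) (dist x (ipow b q x)) + 2 * \<delta>)
           \<longrightarrow> freely_generate a b) \<and>
         ((\<exists>x. \<forall>p q. p \<noteq> 0 \<and> q \<noteq> 0 \<and> \<not> (p < 0 \<and> q < 0) \<longrightarrow>
            dist (ipow a p x) (ipow b q x)
              > max (dist x (ipow a p x)) (dist x (ipow b q x)) + 2 * \<delta>)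
           \<longrightarrow> free_semigroup a b)"
proof (intro conjI impI)
  assume "\<exists>x. \<forall>p q. p \<noteq> 0 \<and> q \<noteq> 0 \<longrightarrow>
            dist (ipow a p x) (ipow b q x)
              > max (dist x (ipow a p x)) (dist x (ipow b q x)) + 2 * \<delta>"
  then obtain x where H: "\<forall>p q. p \<noteq> 0 \<and> q \<noteq> 0 \<longrightarrow>
            dist (ipow a p x) (ipow b q x)
              > max (dist x (ipow a p x)) (dist x (ipow b q x)) + 2 * \<delta>" by blast
  show "freely_generate a b" unfolding freely_generate_def
  proof (intro allI impI)
    fix w :: "(bool \<times> bool) list"
    have Hp: "\<forall>p q. p \<noteq> 0 \<and> q \<noteq> 0 \<and> \<not> (p < 0 \<and> q < 0) \<longrightarrow>
            dist (ipow a p x) (ipow b q x)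
              > max (dist x (ipow a p x)) (dist x (ipow b q x)) + 2 * \<delta>" using H by simp
    have Ha: "\<not> False \<longrightarrow> (\<forall>p q. p \<noteq> 0 \<and> q \<noteq> 0 \<longrightarrow>
            dist (ipow a p x) (ipow b q x)
              > max (dist x (ipow a p x)) (dist x (ipow b q x)) + 2 * \<delta>)" using H by simp
    assume w: "w \<noteq> [] \<and> reduced w"
    show "eval_word a b w \<noteq> id"
      using notid[where pos = False, OF hyp isoa isob Hp Ha] w by simp
  qed
next
  assume "\<exists>x. \<forall>p q. p \<noteq> 0 \<and> q \<noteq> 0 \<and> \<not> (p < 0 \<and> q < 0) \<longrightarrow>
            dist (ipow a p x) (ipow b q x)
              > max (dist x (ipow a p x)) (dist x (ipow b q x)) + 2 * \<delta>"
  then obtain x where H: "\<forall>p q. p \<noteq> 0 \<and> q \<noteq> 0 \<and> \<not> (p < 0 \<and> q < 0) \<longrightarrow>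
            dist (ipow a p x) (ipow b q x)
              > max (dist x (ipow a p x)) (dist x (ipow b q x)) + 2 * \<delta>" by blast
  have Ha: "\<not> True \<longrightarrow> (\<forall>p q. p \<noteq> 0 \<and> q \<noteq> 0 \<longrightarrow>
            dist (ipow a p x) (ipow b q x)
              > max (dist x (ipow a p x)) (dist x (ipow b q x)) + 2 * \<delta>)" by simp
  note S' = S[where pos = True, OF hyp isoa isob H Ha]
  note N' = notid[where pos = True, OF hyp isoa isob H Ha]
  have ni: "eval_pos_word a b u \<noteq> id" if "u \<noteq> []" for u
    using N'[of "map (\<lambda>g. (g, False)) u"] that pos_reduced by (simp add: pos_eval)
  have main: "\<forall>v. u \<noteq> [] \<longrightarrow> v \<noteq> [] \<longrightarrow> u \<noteq> v \<longrightarrow> eval_pos_word a b u \<noteq> eval_pos_word a b v" for u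
  proof (induction u)
    case Nil then show ?case by simp
  next
    case (Cons g u')
    show ?case
    proof (intro allI impI)
      fix v assume v: "v \<noteq> []" and ne: "g # u' \<noteq> v"
      obtain h v' where hv: "v = h # v'" using v by (cases v) auto
      show "eval_pos_word a b (g # u') \<noteq> eval_pos_word a b v"
      proof (cases "g = h")
        case True
        have inj: "inj (gen a b g)" using iso_gen[OF isoa isob] unfolding isometry_def
          by (simp add: bij_is_inj)
        show ?thesis
        proof
          assume eq: "eval_pos_word a b (g # u') = eval_pos_word a b v"
          have "eval_pos_word a b u' = eval_pos_word a b v'"
          proof
            fix z
            have "gen a b g (eval_pos_word a b u' z) = gen a b g (eval_pos_word a b v' z)"
              using fun_cong[OF eq, of z] hv True by (simp add: gen_def)
            then show "eval_pos_word a b u' z = eval_pos_word a b v' z" using inj by (simp add: inj_eq)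
          qed
          moreover have "u' \<noteq> v'" using ne hv True by simp
          moreover have "eval_pos_word a b [] = id" by simp
          ultimately show False
          proof (cases "u' = []")
            case True
            then show False using \<open>u' \<noteq> v'\<close> ni[of v'] \<open>eval_pos_word a b u' = eval_pos_word a b v'\<close> by auto
          next
            case F2: False
            show False
            proof (cases "v' = []")
              case True
              then show False using ni[of u'] F2 \<open>eval_pos_word a b u' = eval_pos_word a b v'\<close> by auto
            next
              case False
              then show False using Cons.IH F2 \<open>u' \<noteq> v'\<close> \<open>eval_pos_word a b u' = eval_pos_word a b v'\<close> by blast
            qed
          qed
        qed
      next
        case False
        show ?thesis
        proof
          assume eq: "eval_pos_word a b (g # u') = eval_pos_word a b v"
          define z where "z = eval_pos_word a b v x"
          have ne1: "map (\<lambda>g. (g, False)) (g # u') \<noteq> []" by simp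
          have af1: "True \<longrightarrow> (\<forall>l\<in>set (map (\<lambda>g. (g, False)) (g # u')). snd l = False)" by auto
          have ne2: "map (\<lambda>g. (g, False)) v \<noteq> []" using v by simp
          have af2: "True \<longrightarrow> (\<forall>l\<in>set (map (\<lambda>g. (g, False)) v). snd l = False)" by auto
          have e1: "fst (hd (map (\<lambda>g. (g, False)) (g # u'))) = g" by simp
          have e2: "fst (hd (map (\<lambda>g. (g, False)) v)) = h" using hv by simp
          have e3: "eval_word a b (map (\<lambda>g. (g, False)) (g # u')) x = z"
            by (simp only: z_def pos_eval[symmetric] eq)
          have e4: "eval_word a b (map (\<lambda>g. (g, False)) v) x = z"
            by (simp only: z_def pos_eval[symmetric])
          obtain j where j: "j \<noteq> 0" "True \<longrightarrow> j > 0"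
            "gromov_product (ipow (gen a b g) j x) x z < dist x (ipow (gen a b g) j x) / 2"
            using S'[OF pos_reduced ne1 af1] unfolding e1 e3 by blast
          obtain i where i: "i \<noteq> 0" "True \<longrightarrow> i > 0"
            "gromov_product (ipow (gen a b h) i x) x z < dist x (ipow (gen a b h) i x) / 2"
            using S'[OF pos_reduced ne2 af2] unfolding e2 e4 by blast
          define Gj where "Gj = ipow (gen a b g) j x"
          define Hi where "Hi = ipow (gen a b h) i x"
          have c: "gromov_product x Gj Hi < min (dist x Gj) (dist x Hi) / 2 - \<delta>"
            using pair[where pos = True, OF hyp isoa isob H Ha False j(1) i(1)] j(2) i(2)
            unfolding Gj_def Hi_def by auto
          have 1: "gromov_product x Gj z > dist x Gj / 2"
            using j(3) gp_sum[of Gj x z] unfolding Gj_def by (simp add: dist_commute)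
          have 2: "gromov_product x Hi z > dist x Hi / 2"
            using i(3) gp_sum[of Hi x z] unfolding Hi_def by (simp add: dist_commute)
          have fp: "gromov_product x Gj Hi \<ge> min (gromov_product x Gj z) (gromov_product x z Hi) - \<delta>"
            using four_point[OF hyp] by blast
          show False using c 1 2 fp gp_comm[of x z Hi] by (simp add: min_def split: if_splits)
        qed
      qed
    qed
  qed
  show "free_semigroup a b" unfolding free_semigroup_def using main by blast
qed

end
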